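(* Let $\mathbb{F}$ be a finite field and $n\ge2$. Let $\mathcal{F}: 0\subsetneq V_1\subsetneq V_2=\mathbb{F}^n$ and $\mathcal{F}': 0\subsetneq V'_1\subsetneq V'_2=\mathbb{F}^n$ be two flags of length $2$. Then the semigroups $\varphi(\mathcal{F})$ and $\varphi(\mathcal{F}')$ are isomorphic if and only if $\{\dim V_1,\dim(V_2/V_1)\}=\{\dim V'_1,\dim(V'_2/V'_1)\}$.
   Context: $M(n,\mathbb{F})$ is the semigroup of $n\times n$ matrices over $\mathbb{F}$, identified with linear operators on $\mathbb{F}^n$. For a flag $\mathcal{F}: 0=V_0\subsetneq V_1\subsetneq\cdots\subsetneq V_k=\mathbb{F}^n$, $\varphi(\mathcal{F})=\{a\in M(n,\mathbb{F}) : a(V_i)\subseteq V_{i-1}\text{ for all } i=1,\dots,k\}$. Isomorphism means semigroup isomorphism. *)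

theory Defs
  imports "HOL-Analysis.Analysis"
begin

definition is_flag :: "('a::field ^ 'n) set list \<Rightarrow> bool" where
  "is_flag Vs \<longleftrightarrow> length Vs \<ge> 1 \<and> (\<forall>V\<in>set Vs. vec.subspace V)
     \<and> Vs ! 0 = {0} \<and> last Vs = UNIV
     \<and> (\<forall>i. Suc i < length Vs \<longrightarrow> Vs ! i \<subset> Vs ! Suc i)"

definition flag_semigroup :: "('a::field ^ 'n) set list \<Rightarrow> ('a ^ 'n ^ 'n) set" where
  "flag_semigroup Vs = {A. \<forall>i. 1 \<le> i \<and> i < length Vs \<longrightarrow> (\<lambda>v. A *v v) ` (Vs ! i) \<subseteq> Vs ! (i - 1)}"

definition semigroup_isomorphic :: "('a::field ^ 'n ^ 'n) set \<Rightarrow> ('a ^ 'n ^ 'n) set \<Rightarrow> bool" where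
  "semigroup_isomorphic S T \<longleftrightarrow>
     (\<exists>f. bij_betw f S T \<and> (\<forall>x\<in>S. \<forall>y\<in>S. f (x ** y) = f x ** f y))"

end

theory Submission imports Defs begin
lemma card_subspace:
  fixes V :: "('a::{field,finite} ^ 'n) set"
  assumes "vec.subspace V"
  shows "card V = CARD('a) ^ vec.dim V"
proof -
  obtain B where B: "B \<subseteq> V" "vec.independent B" "V \<subseteq> vec.span B" "card B = vec.dim V"
    by (rule vec.basis_exists)
  have fB: "finite B" by simp
  have spanB: "vec.span B = V" using B assms vec.span_subspace by blast
  let ?f = "\<lambda>u. \<Sum>v\<in>B. u v *s v"
  have "bij_betw ?f (Pi\<^sub>E B (\<lambda>_. UNIV)) V"
  proof (rule bij_betw_imageI)
    show "inj_on ?f (Pi\<^sub>E B (\<lambda>_. UNIV))"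
    proof (rule inj_onI)
      fix u w assume u: "u \<in> Pi\<^sub>E B (\<lambda>_. UNIV)" and w: "w \<in> Pi\<^sub>E B (\<lambda>_. UNIV)" and eq: "?f u = ?f w"
      have "(\<Sum>v\<in>B. (u v - w v) *s v) = 0"
        using eq by (simp add: vector_sub_rdistrib sum_subtractf)
      have "\<forall>v\<in>B. u v - w v = 0"
      proof (rule ccontr)
        assume "\<not> (\<forall>v\<in>B. u v - w v = 0)"
        with \<open>(\<Sum>v\<in>B. (u v - w v) *s v) = 0\<close> have "vec.dependent B"
          unfolding vec.dependent_finite[OF fB] by (intro exI[of _ "\<lambda>v. u v - w v"]) auto
        with B(2) show False by contradiction
      qed
      thus "u = w" using u w by (auto simp: PiE_iff extensional_def intro!: ext)
    qed
    show "?f ` Pi\<^sub>E B (\<lambda>_. UNIV) = V"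
    proof
      show "?f ` Pi\<^sub>E B (\<lambda>_. UNIV) \<subseteq> V"
        using spanB vec.span_finite[OF fB] by auto
      show "V \<subseteq> ?f ` Pi\<^sub>E B (\<lambda>_. UNIV)"
      proof
        fix x assume "x \<in> V"
        then obtain u where "x = ?f u" using spanB vec.span_finite[OF fB] by auto
        moreover have "?f u = ?f (restrict u B)" by (rule sum.cong) auto
        moreover have "restrict u B \<in> Pi\<^sub>E B (\<lambda>_. UNIV)" by simp
        ultimately show "x \<in> ?f ` Pi\<^sub>E B (\<lambda>_. UNIV)" by blast
      qed
    qed
  qed
  hence "card V = card (Pi\<^sub>E B (\<lambda>_. UNIV :: 'a set))" by (simp add: bij_betw_same_card)
  also have "\<dots> = CARD('a) ^ card B" by (simp add: card_PiE)
  finally show ?thesis using B(4) by simp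
qed

lemma card_S:
  fixes V :: "('a::{field,finite} ^ 'n) set"
  assumes sV: "vec.subspace V"
  shows "card {A::'a^'n^'n. (\<forall>v\<in>V. A *v v = 0) \<and> (\<forall>v. A *v v \<in> V)}
     = CARD('a) ^ (vec.dim V * (CARD('n) - vec.dim V))"
proof -
  let ?S = "{A::'a^'n^'n. (\<forall>v\<in>V. A *v v = 0) \<and> (\<forall>v. A *v v \<in> V)}"
  obtain B where B: "B \<subseteq> V" "vec.independent B" "V \<subseteq> vec.span B" "card B = vec.dim V"
    by (rule vec.basis_exists)
  obtain C where C: "B \<subseteq> C" "vec.independent C" "UNIV \<subseteq> vec.span C"
    by (rule vec.maximal_independent_subset_extend[of B UNIV]) (use B(2) in auto)
  have cC: "card C = CARD('n)"
    using vec.basis_card_eq_dim[of C UNIV] C vec_dim_card[where 'a='a and 'n='n] by auto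
  define D where "D = C - B"
  have cD: "card D = CARD('n) - vec.dim V"
    unfolding D_def using C(1) cC B(4) by (simp add: card_Diff_subset)
  have spanC: "x \<in> vec.span C" for x using C(3) by blast
  let ?P = "\<lambda>A::'a^'n^'n. restrict (\<lambda>d. A *v d) D"
  have "bij_betw ?P ?S (Pi\<^sub>E D (\<lambda>_. V))"
  proof (rule bij_betw_imageI)
    show "inj_on ?P ?S"
    proof (rule inj_onI)
      fix A A' assume A: "A \<in> ?S" and A': "A' \<in> ?S" and eq: "?P A = ?P A'"
      have "A *v x = A' *v x" for x
      proof (rule vec.linear_eq_on_span[OF matrix_vector_mul_linear_gen matrix_vector_mul_linear_gen _ spanC])
        fix c assume c: "c \<in> C"
        show "A *v c = A' *v c"
        proof (cases "c \<in> B")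
          case True then show ?thesis using A A' B(1) by auto
        next
          case False then have "c \<in> D" using c D_def by auto
          then show ?thesis using fun_cong[OF eq, of c] by simp
        qed
      qed
      then show "A = A'" by (simp add: matrix_eq)
    qed
    show "?P ` ?S = Pi\<^sub>E D (\<lambda>_. V)"
    proof
      show "?P ` ?S \<subseteq> Pi\<^sub>E D (\<lambda>_. V)" by auto
      show "Pi\<^sub>E D (\<lambda>_. V) \<subseteq> ?P ` ?S"
      proof
        fix h assume h: "h \<in> Pi\<^sub>E D (\<lambda>_. V)"
        define g where "g = vec.construct C (\<lambda>x. if x \<in> D then h x else 0)"
        have lg: "Vector_Spaces.linear (*s) (*s) g" unfolding g_def by (rule vec.linear_construct[OF C(2)])
        define A where "A = matrix g"
        have Ag: "A *v x = g x" for x unfolding A_def using matrix_vector_mul(1)[OF lg] by metis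
        have gC: "g c = (if c \<in> D then h c else 0)" if "c \<in> C" for c
          unfolding g_def using vec.construct_basis[OF C(2) that, of "\<lambda>x. if x \<in> D then h x else 0"] by simp
        have "g c \<in> V" if "c \<in> C" for c
          using gC[OF that] h vec.subspace_0[OF sV] by (auto simp: PiE_iff)
        hence "vec.span (g ` C) \<subseteq> V" using vec.span_minimal[OF _ sV] by blast
        hence img: "A *v v \<in> V" for v
          using vec.linear_span_image[OF lg, of C] spanC[of v] Ag by auto
        have zero: "A *v v = 0" if "v \<in> V" for v
        proof -
          have "g v = (\<lambda>x. 0) v"
          proof (rule vec.linear_eq_on_span[OF lg vec.linear_zero _ ])
            show "v \<in> vec.span B" using that B(3) by blast
            fix b assume "b \<in> B" then show "g b = 0" using gC[of b] C(1) D_def by auto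
          qed
          then show ?thesis using Ag by simp
        qed
        have "A \<in> ?S" using img zero by auto
        moreover have "?P A = h" using h Ag gC D_def by (auto simp: PiE_iff extensional_def intro!: ext)
        ultimately show "h \<in> ?P ` ?S" by blast
      qed
    qed
  qed
  hence "card ?S = card (Pi\<^sub>E D (\<lambda>_. V))" by (simp add: bij_betw_same_card)
  also have "\<dots> = card V ^ card D" by (simp add: card_PiE)
  also have "\<dots> = CARD('a) ^ (vec.dim V * (CARD('n) - vec.dim V))"
    using card_subspace[OF sV] cD by (simp add: power_mult)
  finally show ?thesis .
qed

lemma arith_key:
  fixes k k' n :: nat
  assumes "k \<le> n" "k' \<le> n"
  shows "k * (n - k) = k' * (n - k') \<longleftrightarrow> {k, n - k} = {k', n - k'}"
proof
  assume h: "k * (n - k) = k' * (n - k')"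
  obtain m where m: "n = k + m" using assms(1) le_Suc_ex by blast
  obtain m' where m': "n = k' + m'" using assms(2) le_Suc_ex by blast
  have "n - k = m" "n - k' = m'" using m m' by simp_all
  hence "k * m = k' * m'" using h by simp
  hence e1: "int k * int m = int k' * int m'" by (metis of_nat_mult)
  have e2: "int m = int k' + int m' - int k" using m m' by simp
  have "(int k - int k') * (int k - int m') = int k' * int m' - int k * (int k' + int m' - int k)"
    by (simp add: algebra_simps)
  also have "\<dots> = 0" using e1 e2 by simp
  finally have "(int k - int k') * (int k - int m') = 0" .
  hence "k = k' \<or> k = m'" by auto
  thus "{k, n - k} = {k', n - k'}" using m m' by auto
next
  assume "{k, n - k} = {k', n - k'}"
  hence "(k = k' \<and> n - k = n - k') \<or> (k = n - k' \<and> n - k = k')" by (auto simp: doubleton_eq_iff)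
  thus "k * (n - k) = k' * (n - k')" by (auto simp: mult.commute)
qed
lemma flag_eq:
  "flag_semigroup [{0}, V, UNIV] = {A::'a::field^'n^'n. (\<forall>v\<in>V. A *v v = 0) \<and> (\<forall>v. A *v v \<in> V)}"
proof -
  have i: "(\<forall>i. 1 \<le> i \<and> i < (3::nat) \<longrightarrow> Q i) \<longleftrightarrow> Q 1 \<and> Q 2" for Q
  proof
    assume "Q 1 \<and> Q 2"
    thus "\<forall>i. 1 \<le> i \<and> i < (3::nat) \<longrightarrow> Q i"
      by (metis One_nat_def Suc_1 le_antisym less_Suc_eq_le not_less_eq_eq numeral_3_eq_3)
  qed auto
  have "(\<forall>i. 1 \<le> i \<and> i < length [{0},V,UNIV] \<longrightarrow> (\<lambda>v. A *v v) ` ([{0},V,UNIV] ! i) \<subseteq> [{0},V,UNIV] ! (i-1))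
     \<longleftrightarrow> (\<lambda>v. A *v v) ` V \<subseteq> {0} \<and> (\<lambda>v. A *v v) ` UNIV \<subseteq> V" for A :: "'a^'n^'n"
    using i[of "\<lambda>i. (\<lambda>v. A *v v) ` ([{0},V,UNIV] ! i) \<subseteq> [{0},V,UNIV] ! (i-1)"]
    by (simp add: numeral_2_eq_2 numeral_3_eq_3)
  then show ?thesis unfolding flag_semigroup_def by auto
qed

lemma null_iso:
  fixes S T :: "('a::field ^ 'n ^ 'n) set"
  assumes "finite S" "finite T" "0 \<in> S" "0 \<in> T"
    and nS: "\<forall>x\<in>S. \<forall>y\<in>S. x ** y = 0" and nT: "\<forall>x\<in>T. \<forall>y\<in>T. x ** y = 0"
  shows "semigroup_isomorphic S T \<longleftrightarrow> card S = card T"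
proof
  assume "semigroup_isomorphic S T"
  thus "card S = card T" unfolding semigroup_isomorphic_def using bij_betw_same_card by blast
next
  assume c: "card S = card T"
  have cc: "card (S - {0}) = card (T - {0})" using c assms by (simp add: card_Diff_singleton)
  have "\<exists>g. bij_betw g (S - {0}) (T - {0})"
    by (rule finite_same_card_bij) (use assms cc in auto)
  then obtain g where g: "bij_betw g (S - {0}) (T - {0})" by blast
  define f where "f = (\<lambda>x. if x = 0 then 0 else g x)"
  have "bij_betw f S T"
  proof (rule bij_betw_imageI)
    show "inj_on f S" using g unfolding f_def bij_betw_def inj_on_def by auto
    show "f ` S = T"
    proof
      show "f ` S \<subseteq> T" using g assms unfolding f_def bij_betw_def by auto
      show "T \<subseteq> f ` S"
      proof
        fix t assume t: "t \<in> T"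
        show "t \<in> f ` S"
        proof (cases "t = 0")
          case True then show ?thesis using assms f_def by force
        next
          case False
          have "t \<in> g ` (S - {0})" using g t False unfolding bij_betw_def by auto
          then obtain s where "s \<in> S - {0}" "g s = t" by blast
          then show ?thesis unfolding f_def by force
        qed
      qed
    qed
  qed
  moreover have "f (x ** y) = f x ** f y" if "x \<in> S" "y \<in> S" for x y
  proof -
    have "f x \<in> T" "f y \<in> T" using that \<open>bij_betw f S T\<close> bij_betwE by blast+
    thus ?thesis using nS nT that unfolding f_def by simp
  qed
  ultimately show "semigroup_isomorphic S T" unfolding semigroup_isomorphic_def by blast
qed

lemma null_S:
  fixes V :: "('a::field ^ 'n) set"
  assumes "A \<in> {A. (\<forall>v\<in>V. A *v v = 0) \<and> (\<forall>v. A *v v \<in> V)}"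
      and "B \<in> {A. (\<forall>v\<in>V. A *v v = 0) \<and> (\<forall>v. A *v v \<in> V)}"
  shows "A ** B = 0"
proof -
  have "(A ** B) *v v = 0 *v v" for v
  proof -
    have "B *v v \<in> V" using assms(2) by blast
    hence "A *v (B *v v) = 0" using assms(1) by blast
    thus ?thesis by (simp add: matrix_vector_mul_assoc[symmetric])
  qed
  thus ?thesis by (simp add: matrix_eq)
qed

theorem lemma12:
  fixes V1 V1' :: "('a::{field,finite} ^ 'n) set"
  assumes "CARD('n) \<ge> 2"
    and "is_flag [{0}, V1, UNIV]"
    and "is_flag [{0}, V1', UNIV]"
  shows "semigroup_isomorphic (flag_semigroup [{0}, V1, UNIV]) (flag_semigroup [{0}, V1', UNIV])
     \<longleftrightarrow> {vec.dim V1, CARD('n) - vec.dim V1} = {vec.dim V1', CARD('n) - vec.dim V1'}"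
proof -
  have s1: "vec.subspace V1" using assms(2) unfolding is_flag_def by simp
  have s2: "vec.subspace V1'" using assms(3) unfolding is_flag_def by simp
  have k1: "vec.dim V1 \<le> CARD('n)" using vec.dim_subset[of V1 UNIV] vec_dim_card[where 'a='a and 'n='n] by auto
  have k2: "vec.dim V1' \<le> CARD('n)" using vec.dim_subset[of V1' UNIV] vec_dim_card[where 'a='a and 'n='n] by auto
  have q: "1 < CARD('a)"
  proof -
    have "card {0::'a, 1} \<le> CARD('a)" by (rule card_mono) auto
    thus ?thesis by simp
  qed
  have "semigroup_isomorphic (flag_semigroup [{0}, V1, UNIV]) (flag_semigroup [{0}, V1', UNIV])
     \<longleftrightarrow> card (flag_semigroup [{0}, V1, UNIV]) = card (flag_semigroup [{0}, V1', UNIV])"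
    unfolding flag_eq
    by (rule null_iso) (auto intro: null_S simp: vec.subspace_0[OF s1] vec.subspace_0[OF s2])
  also have "\<dots> \<longleftrightarrow> CARD('a) ^ (vec.dim V1 * (CARD('n) - vec.dim V1))
      = CARD('a) ^ (vec.dim V1' * (CARD('n) - vec.dim V1'))"
    unfolding flag_eq card_S[OF s1] card_S[OF s2] ..
  also have "\<dots> \<longleftrightarrow> vec.dim V1 * (CARD('n) - vec.dim V1) = vec.dim V1' * (CARD('n) - vec.dim V1')"
    using q by (rule power_inject_exp)
  also have "\<dots> \<longleftrightarrow> {vec.dim V1, CARD('n) - vec.dim V1} = {vec.dim V1', CARD('n) - vec.dim V1'}"
    by (rule arith_key[OF k1 k2])
  finally show ?thesis .
qed

end
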